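(* Let $E$ be a regular biordered set satisfying: (E1) there exists an element $0\in E$ such that $0\,\omega\,e$ for every $e\in E$; (E2) there exists a map $E\to E$, $e\mapsto e'$, such that for all $e,f\in E$: (i) $(e')'=e$; (ii) $f\,\omega^l\,e$ if and only if $e'\,\omega^r\,f'$; (iii) $f\,\omega^l\,e'$ if and only if $M(f,e)=\{0\}$. Then there exists a strongly regular Baer semigroup $S$ such that $E$ is (isomorphic to) the biordered set of idempotents of $S$.
   Context: For a semigroup $S$, its biordered set $E(S)$ is the set of idempotents of $S$ regarded as a partial algebra: for $e,f\in E(S)$ the product $ef$ (computed in $S$) is defined exactly when $\{ef,fe\}\cap\{e,f\}\neq\emptyset$. A semigroup is regular if for every $x$ there is $y$ with $xyx=x$. A regular biordered set is a partial algebra isomorphic to $E(S)$ for some regular semigroup $S$ (equivalently, a biordered set in Nambooripad's axiomatic sense satisfying the regularity axiom). In a biordered set $E$: $\omega^l=\{(e,f): ef=e\}$, $\omega^r=\{(e,f): fe=e\}$, $\omega=\omega^l\cap\omega^r$; $M(e,f)=\{g\in E: g\,\omega^l\,e \text{ and } g\,\omega^r\,f\}$. For a semigroup $S$ with zero $0$, the left annihilator of $s$ is $\{x\in S: xs=0\}$ and the right annihilator is $\{x\in S: sx=0\}$. $S$ is a strongly regular Baer semigroup if the set of left annihilators of elements of $S$ equals the set of principal left ideals of $S$, and the set of right annihilators of elements of $S$ equals the set of principal right ideals of $S$. *)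

theory Defs
  imports Main
begin

definition semigroup_on :: "'b set \<Rightarrow> ('b \<Rightarrow> 'b \<Rightarrow> 'b) \<Rightarrow> bool" where
  "semigroup_on S m \<longleftrightarrow>
     (\<forall>x\<in>S. \<forall>y\<in>S. m x y \<in> S) \<and>
     (\<forall>x\<in>S. \<forall>y\<in>S. \<forall>z\<in>S. m (m x y) z = m x (m y z))"

definition regular_semigroup_on :: "'b set \<Rightarrow> ('b \<Rightarrow> 'b \<Rightarrow> 'b) \<Rightarrow> bool" where
  "regular_semigroup_on S m \<longleftrightarrow>
     semigroup_on S m \<and> (\<forall>x\<in>S. \<exists>y\<in>S. m (m x y) x = x)"

definition idems :: "'b set \<Rightarrow> ('b \<Rightarrow> 'b \<Rightarrow> 'b) \<Rightarrow> 'b set" where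
  "idems S m = {e \<in> S. m e e = e}"

text \<open>The biordered set E(S) as a partial algebra: the partial product on idempotents,
  defined exactly when {ef, fe} meets {e, f}; None means undefined.\<close>
definition bos_prod :: "'b set \<Rightarrow> ('b \<Rightarrow> 'b \<Rightarrow> 'b) \<Rightarrow> 'b \<Rightarrow> 'b \<Rightarrow> 'b option" where
  "bos_prod S m e f =
     (if e \<in> idems S m \<and> f \<in> idems S m \<and> {m e f, m f e} \<inter> {e, f} \<noteq> {}
      then Some (m e f) else None)"

definition partial_algebra :: "'a set \<Rightarrow> ('a \<Rightarrow> 'a \<Rightarrow> 'a option) \<Rightarrow> bool" where
  "partial_algebra E p \<longleftrightarrow>
     (\<forall>e f g. p e f = Some g \<longrightarrow> e \<in> E \<and> f \<in> E \<and> g \<in> E)"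

definition iso_to_bos ::
  "'a set \<Rightarrow> ('a \<Rightarrow> 'a \<Rightarrow> 'a option) \<Rightarrow> 'b set \<Rightarrow> ('b \<Rightarrow> 'b \<Rightarrow> 'b) \<Rightarrow> ('a \<Rightarrow> 'b) \<Rightarrow> bool" where
  "iso_to_bos E p S m \<phi> \<longleftrightarrow>
     bij_betw \<phi> E (idems S m) \<and>
     (\<forall>e\<in>E. \<forall>f\<in>E. map_option \<phi> (p e f) = bos_prod S m (\<phi> e) (\<phi> f))"

definition is_bos_of_regular :: "'a set \<Rightarrow> ('a \<Rightarrow> 'a \<Rightarrow> 'a option) \<Rightarrow> 'b set \<Rightarrow> ('b \<Rightarrow> 'b \<Rightarrow> 'b) \<Rightarrow> bool" where
  "is_bos_of_regular E p S m \<longleftrightarrow>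
     partial_algebra E p \<and> regular_semigroup_on S m \<and> (\<exists>\<phi>. iso_to_bos E p S m \<phi>)"

definition omega_l :: "('a \<Rightarrow> 'a \<Rightarrow> 'a option) \<Rightarrow> 'a \<Rightarrow> 'a \<Rightarrow> bool" where
  "omega_l p e f \<longleftrightarrow> p e f = Some e"

definition omega_r :: "('a \<Rightarrow> 'a \<Rightarrow> 'a option) \<Rightarrow> 'a \<Rightarrow> 'a \<Rightarrow> bool" where
  "omega_r p e f \<longleftrightarrow> p f e = Some e"

definition omega :: "('a \<Rightarrow> 'a \<Rightarrow> 'a option) \<Rightarrow> 'a \<Rightarrow> 'a \<Rightarrow> bool" where
  "omega p e f \<longleftrightarrow> omega_l p e f \<and> omega_r p e f"

definition Mset :: "'a set \<Rightarrow> ('a \<Rightarrow> 'a \<Rightarrow> 'a option) \<Rightarrow> 'a \<Rightarrow> 'a \<Rightarrow> 'a set" where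
  "Mset E p e f = {g \<in> E. omega_l p g e \<and> omega_r p g f}"

definition is_zero :: "'b set \<Rightarrow> ('b \<Rightarrow> 'b \<Rightarrow> 'b) \<Rightarrow> 'b \<Rightarrow> bool" where
  "is_zero S m z \<longleftrightarrow> z \<in> S \<and> (\<forall>x\<in>S. m z x = z \<and> m x z = z)"

definition left_ann :: "'b set \<Rightarrow> ('b \<Rightarrow> 'b \<Rightarrow> 'b) \<Rightarrow> 'b \<Rightarrow> 'b \<Rightarrow> 'b set" where
  "left_ann S m z s = {x \<in> S. m x s = z}"

definition right_ann :: "'b set \<Rightarrow> ('b \<Rightarrow> 'b \<Rightarrow> 'b) \<Rightarrow> 'b \<Rightarrow> 'b \<Rightarrow> 'b set" where
  "right_ann S m z s = {x \<in> S. m s x = z}"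

definition princ_left :: "'b set \<Rightarrow> ('b \<Rightarrow> 'b \<Rightarrow> 'b) \<Rightarrow> 'b \<Rightarrow> 'b set" where
  "princ_left S m a = insert a {m x a | x. x \<in> S}"

definition princ_right :: "'b set \<Rightarrow> ('b \<Rightarrow> 'b \<Rightarrow> 'b) \<Rightarrow> 'b \<Rightarrow> 'b set" where
  "princ_right S m a = insert a {m a x | x. x \<in> S}"

definition strongly_regular_Baer :: "'b set \<Rightarrow> ('b \<Rightarrow> 'b \<Rightarrow> 'b) \<Rightarrow> bool" where
  "strongly_regular_Baer S m \<longleftrightarrow>
     semigroup_on S m \<and>
     (\<exists>z. is_zero S m z \<and>
        {left_ann S m z s | s. s \<in> S} = {princ_left S m a | a. a \<in> S} \<and>
        {right_ann S m z s | s. s \<in> S} = {princ_right S m a | a. a \<in> S})"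

end

theory Submission
  imports Defs
begin

locale bx =
  fixes E :: "'a set" and p :: "'a \<Rightarrow> 'a \<Rightarrow> 'a option"
    and S0 :: "'b set" and m0 :: "'b \<Rightarrow> 'b \<Rightarrow> 'b" (infixl "\<cdot>" 70)
    and \<phi> :: "'a \<Rightarrow> 'b" and z :: 'a and c :: "'a \<Rightarrow> 'a"
  assumes sg: "semigroup_on S0 m0"
    and rg: "\<forall>x\<in>S0. \<exists>y\<in>S0. x \<cdot> y \<cdot> x = x"
    and pa: "partial_algebra E p"
    and bj: "bij_betw \<phi> E (idems S0 m0)"
    and hm: "\<forall>e\<in>E. \<forall>f\<in>E. map_option \<phi> (p e f) = bos_prod S0 m0 (\<phi> e) (\<phi> f)"
    and zE: "z \<in> E" and zw: "\<forall>e\<in>E. omega p z e"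
    and cE: "\<forall>e\<in>E. c e \<in> E" and cc: "\<forall>e\<in>E. c (c e) = e"
    and c2: "\<forall>e\<in>E. \<forall>f\<in>E. omega_l p f e \<longleftrightarrow> omega_r p (c e) (c f)"
    and c3: "\<forall>e\<in>E. \<forall>f\<in>E. omega_l p f (c e) \<longleftrightarrow> Mset E p f e = {z}"
begin

lemma cl[simp]: "x \<in> S0 \<Longrightarrow> y \<in> S0 \<Longrightarrow> x \<cdot> y \<in> S0"
  using sg unfolding semigroup_on_def by blast

lemma as[simp]: "x \<in> S0 \<Longrightarrow> y \<in> S0 \<Longrightarrow> w \<in> S0 \<Longrightarrow> x \<cdot> y \<cdot> w = x \<cdot> (y \<cdot> w)"
  using sg unfolding semigroup_on_def by blast

lemma inv: "x \<in> S0 \<Longrightarrow> \<exists>y\<in>S0. x \<cdot> (y \<cdot> x) = x"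
  using rg by fastforce

lemma phiS[simp]: "\<alpha> \<in> E \<Longrightarrow> \<phi> \<alpha> \<in> S0"
  using bj unfolding bij_betw_def idems_def by auto

lemma phiI[simp]: "\<alpha> \<in> E \<Longrightarrow> \<phi> \<alpha> \<cdot> \<phi> \<alpha> = \<phi> \<alpha>"
  using bj unfolding bij_betw_def idems_def by auto

lemma phiI2[simp]: "\<alpha> \<in> E \<Longrightarrow> x \<in> S0 \<Longrightarrow> \<phi> \<alpha> \<cdot> (\<phi> \<alpha> \<cdot> x) = \<phi> \<alpha> \<cdot> x"
  by (metis as phiI phiS)

lemma idemE: "g \<in> S0 \<Longrightarrow> g \<cdot> g = g \<Longrightarrow> \<exists>\<gamma>\<in>E. g = \<phi> \<gamma>"
  using bj unfolding bij_betw_def idems_def by auto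

lemma phi_inj: "\<alpha> \<in> E \<Longrightarrow> \<beta> \<in> E \<Longrightarrow> \<phi> \<alpha> = \<phi> \<beta> \<Longrightarrow> \<alpha> = \<beta>"
  using bj unfolding bij_betw_def inj_on_def by auto

lemma pS: assumes "\<alpha> \<in> E" "\<beta> \<in> E" "\<gamma> = \<alpha> \<or> \<gamma> = \<beta>"
  shows "p \<alpha> \<beta> = Some \<gamma> \<longleftrightarrow> \<phi> \<alpha> \<cdot> \<phi> \<beta> = \<phi> \<gamma>"
proof
  assume "p \<alpha> \<beta> = Some \<gamma>"
  then have "Some (\<phi> \<gamma>) = bos_prod S0 m0 (\<phi> \<alpha>) (\<phi> \<beta>)" using hm assms by force
  then show "\<phi> \<alpha> \<cdot> \<phi> \<beta> = \<phi> \<gamma>" unfolding bos_prod_def by (auto split: if_splits)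
next
  assume h: "\<phi> \<alpha> \<cdot> \<phi> \<beta> = \<phi> \<gamma>"
  have "\<phi> \<alpha> \<in> idems S0 m0" "\<phi> \<beta> \<in> idems S0 m0" using assms unfolding idems_def by auto
  then have "bos_prod S0 m0 (\<phi> \<alpha>) (\<phi> \<beta>) = Some (\<phi> \<gamma>)" using h assms unfolding bos_prod_def by auto
  then have "map_option \<phi> (p \<alpha> \<beta>) = Some (\<phi> \<gamma>)" using hm assms by auto
  then obtain \<delta> where d: "p \<alpha> \<beta> = Some \<delta>" "\<phi> \<delta> = \<phi> \<gamma>" by auto
  then have "\<delta> \<in> E" using pa unfolding partial_algebra_def by blast
  then show "p \<alpha> \<beta> = Some \<gamma>" using d phi_inj assms by auto
qed

abbreviation "zz \<equiv> \<phi> z"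

lemma zl[simp]: "\<alpha> \<in> E \<Longrightarrow> zz \<cdot> \<phi> \<alpha> = zz"
  using zw pS[of z \<alpha> z] zE unfolding omega_def omega_l_def by auto

lemma zr[simp]: "\<alpha> \<in> E \<Longrightarrow> \<phi> \<alpha> \<cdot> zz = zz"
  using zw pS[of \<alpha> z z] zE unfolding omega_def omega_r_def by auto

lemma cE'[simp]: "\<alpha> \<in> E \<Longrightarrow> c \<alpha> \<in> E" using cE by auto
lemma cc'[simp]: "\<alpha> \<in> E \<Longrightarrow> c (c \<alpha>) = \<alpha>" using cc by auto

lemma cii: "\<alpha> \<in> E \<Longrightarrow> \<beta> \<in> E \<Longrightarrow>
   \<phi> \<beta> \<cdot> \<phi> \<alpha> = \<phi> \<beta> \<longleftrightarrow> \<phi> (c \<beta>) \<cdot> \<phi> (c \<alpha>) = \<phi> (c \<alpha>)"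
  using c2 pS[of \<beta> \<alpha> \<beta>] pS[of "c \<beta>" "c \<alpha>" "c \<alpha>"] unfolding omega_l_def omega_r_def by auto

lemma Mset_eq: "\<alpha> \<in> E \<Longrightarrow> \<beta> \<in> E \<Longrightarrow>
   Mset E p \<alpha> \<beta> = {\<gamma>\<in>E. \<phi> \<gamma> \<cdot> \<phi> \<alpha> = \<phi> \<gamma> \<and> \<phi> \<beta> \<cdot> \<phi> \<gamma> = \<phi> \<gamma>}"
  unfolding Mset_def omega_l_def omega_r_def using pS by auto

lemma ciii: "\<alpha> \<in> E \<Longrightarrow> \<beta> \<in> E \<Longrightarrow>
   \<phi> \<alpha> \<cdot> \<phi> (c \<beta>) = \<phi> \<alpha> \<longleftrightarrow> (\<forall>\<gamma>\<in>E. \<phi> \<gamma> \<cdot> \<phi> \<alpha> = \<phi> \<gamma> \<and> \<phi> \<beta> \<cdot> \<phi> \<gamma> = \<phi> \<gamma> \<longrightarrow> \<gamma> = z)"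
proof -
  assume a: "\<alpha> \<in> E" "\<beta> \<in> E"
  have "\<phi> \<alpha> \<cdot> \<phi> (c \<beta>) = \<phi> \<alpha> \<longleftrightarrow> Mset E p \<alpha> \<beta> = {z}"
    using c3 a pS[of \<alpha> "c \<beta>" \<alpha>] unfolding omega_l_def by auto
  also have "\<dots> \<longleftrightarrow> (\<forall>\<gamma>\<in>E. \<phi> \<gamma> \<cdot> \<phi> \<alpha> = \<phi> \<gamma> \<and> \<phi> \<beta> \<cdot> \<phi> \<gamma> = \<phi> \<gamma> \<longrightarrow> \<gamma> = z)"
    using Mset_eq[OF a] zE a by auto
  finally show ?thesis .
qed

definition Z :: "'b \<Rightarrow> bool" where "Z x \<longleftrightarrow> (\<exists>u\<in>S0. \<exists>v\<in>S0. x = u \<cdot> (zz \<cdot> v))"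

lemma ZS: "Z x \<Longrightarrow> x \<in> S0" unfolding Z_def using zE by auto
lemma Zl: "Z x \<Longrightarrow> u \<in> S0 \<Longrightarrow> Z (u \<cdot> x)" unfolding Z_def using zE
  by (metis as cl phiS)
lemma Zr: "Z x \<Longrightarrow> u \<in> S0 \<Longrightarrow> Z (x \<cdot> u)" unfolding Z_def using zE
  by (metis as cl phiS)
lemma Zm: "u \<in> S0 \<Longrightarrow> v \<in> S0 \<Longrightarrow> Z (u \<cdot> (zz \<cdot> v))" unfolding Z_def by auto
lemma Zo: "Z zz" using Zm[of zz zz] zE by simp

lemma zz2[simp]: "x \<in> S0 \<Longrightarrow> zz \<cdot> (zz \<cdot> x) = zz \<cdot> x"
  using phiI2 zE by blast
lemma zzS[simp]: "zz \<in> S0" using zE by simp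
lemma zzz[simp]: "zz \<cdot> zz = zz" using zE by simp

lemma Zidem: assumes g: "g \<in> S0" "g \<cdot> g = g" "Z g" shows "g = zz"
proof -
  obtain u v where uv: "u \<in> S0" "v \<in> S0" and gd: "g = u \<cdot> (zz \<cdot> v)" using g unfolding Z_def by auto
  obtain \<gamma> where ga: "\<gamma> \<in> E" "g = \<phi> \<gamma>" using idemE g by auto
  have g2: "g \<cdot> (g \<cdot> w) = g \<cdot> w" if "w \<in> S0" for w using g that by (metis as)
  have e1: "u \<cdot> (zz \<cdot> (v \<cdot> g)) = g"
  proof -
    have "u \<cdot> (zz \<cdot> (v \<cdot> g)) = (u \<cdot> (zz \<cdot> v)) \<cdot> g" using uv g by simp
    also have "\<dots> = g" using gd g by simp
    finally show ?thesis .
  qed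
  define x where "x = g \<cdot> (u \<cdot> zz)"
  define y where "y = zz \<cdot> (v \<cdot> g)"
  have S: "x \<in> S0" "y \<in> S0" using uv g unfolding x_def y_def by auto
  have xy: "x \<cdot> y = g" unfolding x_def y_def using uv g e1 by simp
  have xo: "x \<cdot> zz = x" unfolding x_def using uv g by simp
  have oy: "zz \<cdot> y = y" unfolding y_def using uv g by simp
  have gx: "g \<cdot> x = x" unfolding x_def using uv g g2 by simp
  have yg: "y \<cdot> g = y" unfolding y_def using uv g by simp
  define f where "f = y \<cdot> x"
  have ff: "f \<cdot> f = f"
  proof -
    have "f \<cdot> f = y \<cdot> ((x \<cdot> y) \<cdot> x)" unfolding f_def using S by simp
    also have "\<dots> = f" unfolding f_def using xy gx by simp
    finally show ?thesis .
  qed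
  have "f \<in> S0" unfolding f_def using S by auto
  then obtain \<eta> where et: "\<eta> \<in> E" "f = \<phi> \<eta>" using idemE ff by auto
  have "zz \<cdot> f = f" unfolding f_def using S oy
    by (metis as zzS)
  then have f0: "f = zz" using zl et by auto
  define h where "h = y \<cdot> (zz \<cdot> x)"
  have hS: "h \<in> S0" unfolding h_def using S by auto
  have gz: "g \<cdot> zz = zz" using ga by simp
  have hh: "h \<cdot> h = h"
  proof -
    have "h \<cdot> h = y \<cdot> (zz \<cdot> ((x \<cdot> y) \<cdot> (zz \<cdot> x)))" unfolding h_def using S by simp
    also have "\<dots> = y \<cdot> (zz \<cdot> (g \<cdot> (zz \<cdot> x)))" using xy S by simp
    also have "\<dots> = h" unfolding h_def using gz S g as[of g zz x] by simp
    finally show ?thesis .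
  qed
  obtain \<kappa> where ka: "\<kappa> \<in> E" "h = \<phi> \<kappa>" using idemE hh hS by auto
  have "zz \<cdot> h = h" unfolding h_def using S oy by (metis as cl zzS)
  then have h0: "h = zz" using zl ka by auto
  have "g = x \<cdot> (zz \<cdot> y)" using xo xy S oy by simp
  also have "\<dots> = x \<cdot> (h \<cdot> y)" using h0 by simp
  also have "\<dots> = (x \<cdot> y) \<cdot> (zz \<cdot> (x \<cdot> y))" unfolding h_def using S by simp
  also have "\<dots> = zz" using xy ga by simp
  finally show ?thesis .
qed

lemma K: assumes ab: "\<alpha> \<in> E" "\<beta> \<in> E"
  shows "Z (\<phi> \<alpha> \<cdot> \<phi> \<beta>) \<longleftrightarrow> \<phi> \<alpha> \<cdot> \<phi> (c \<beta>) = \<phi> \<alpha>"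
proof -
  define a where "a = \<phi> \<alpha>"
  define b where "b = \<phi> \<beta>"
  have S[simp]: "a \<in> S0" "b \<in> S0" "a \<cdot> a = a" "b \<cdot> b = b" unfolding a_def b_def using ab by auto
  have a2[simp]: "a \<cdot> (a \<cdot> w) = a \<cdot> w" if "w \<in> S0" for w using that unfolding a_def using ab by simp
  have b2[simp]: "b \<cdot> (b \<cdot> w) = b \<cdot> w" if "w \<in> S0" for w using that unfolding b_def using ab by simp
  have "Z (a \<cdot> b) \<longleftrightarrow> (\<forall>\<gamma>\<in>E. \<phi> \<gamma> \<cdot> a = \<phi> \<gamma> \<and> b \<cdot> \<phi> \<gamma> = \<phi> \<gamma> \<longrightarrow> \<gamma> = z)"
  proof
    assume Zab: "Z (a \<cdot> b)"
    show "\<forall>\<gamma>\<in>E. \<phi> \<gamma> \<cdot> a = \<phi> \<gamma> \<and> b \<cdot> \<phi> \<gamma> = \<phi> \<gamma> \<longrightarrow> \<gamma> = z"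
    proof (intro ballI impI)
      fix \<gamma> assume ga: "\<gamma> \<in> E" "\<phi> \<gamma> \<cdot> a = \<phi> \<gamma> \<and> b \<cdot> \<phi> \<gamma> = \<phi> \<gamma>"
      define g where "g = \<phi> \<gamma>"
      have gS: "g \<in> S0" "g \<cdot> g = g" unfolding g_def using ga by auto
      have "g = (g \<cdot> a) \<cdot> (b \<cdot> g)" using ga gS unfolding g_def by simp
      also have "\<dots> = g \<cdot> ((a \<cdot> b) \<cdot> g)" using gS by simp
      finally have ge: "g = g \<cdot> ((a \<cdot> b) \<cdot> g)" .
      have "Z ((a \<cdot> b) \<cdot> g)" using Zr Zab gS by blast
      then have "Z (g \<cdot> ((a \<cdot> b) \<cdot> g))" using Zl gS by blast
      then have "Z g" using ge by simp
      then have "g = zz" using Zidem gS by auto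
      then show "\<gamma> = z" using phi_inj ga zE unfolding g_def by auto
    qed
  next
    assume H: "\<forall>\<gamma>\<in>E. \<phi> \<gamma> \<cdot> a = \<phi> \<gamma> \<and> b \<cdot> \<phi> \<gamma> = \<phi> \<gamma> \<longrightarrow> \<gamma> = z"
    obtain y where y: "y \<in> S0" "(a \<cdot> b) \<cdot> (y \<cdot> (a \<cdot> b)) = a \<cdot> b" using inv[of "a \<cdot> b"] by auto
    have y': "a \<cdot> (b \<cdot> (y \<cdot> (a \<cdot> (b \<cdot> w)))) = a \<cdot> (b \<cdot> w)" if "w \<in> S0" for w
    proof -
      have "a \<cdot> (b \<cdot> (y \<cdot> (a \<cdot> (b \<cdot> w)))) = ((a \<cdot> b) \<cdot> (y \<cdot> (a \<cdot> b))) \<cdot> w" using y(1) that by simp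
      also have "\<dots> = (a \<cdot> b) \<cdot> w" using y(2) by (simp only:)
      also have "\<dots> = a \<cdot> (b \<cdot> w)" using that by simp
      finally show ?thesis .
    qed
    define w where "w = y \<cdot> (a \<cdot> (b \<cdot> y))"
    define g where "g = b \<cdot> (w \<cdot> a)"
    have gS: "g \<in> S0" unfolding g_def w_def using y by simp
    have gg: "g \<cdot> g = g" unfolding g_def w_def using y y' by simp
    obtain \<gamma> where ga: "\<gamma> \<in> E" "g = \<phi> \<gamma>" using idemE gS gg by auto
    have "g \<cdot> a = g" "b \<cdot> g = g" unfolding g_def w_def using y by simp_all
    then have "\<gamma> = z" using H ga by auto
    then have g0: "g = zz" using ga by simp
    have "a \<cdot> b = a \<cdot> (g \<cdot> b)" unfolding g_def w_def using y y' by simp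
    then show "Z (a \<cdot> b)" using g0 Zm by simp
  qed
  then show ?thesis using ciii[OF ab] unfolding a_def b_def by simp
qed

lemma Kc: "\<alpha> \<in> E \<Longrightarrow> Z (\<phi> \<alpha> \<cdot> \<phi> (c \<alpha>))"
  using K[of \<alpha> "c \<alpha>"] by simp

lemma Kc': "\<alpha> \<in> E \<Longrightarrow> Z (\<phi> (c \<alpha>) \<cdot> \<phi> \<alpha>)"
  using K[of "c \<alpha>" \<alpha>] by simp

lemma idem_of: "s \<in> S0 \<Longrightarrow> y \<in> S0 \<Longrightarrow> s \<cdot> (y \<cdot> s) = s \<Longrightarrow> \<exists>\<alpha>\<in>E. \<phi> \<alpha> = y \<cdot> s"
  using idemE[of "y \<cdot> s"] by (metis as cl)

lemma idem_of': "s \<in> S0 \<Longrightarrow> y \<in> S0 \<Longrightarrow> s \<cdot> (y \<cdot> s) = s \<Longrightarrow> \<exists>\<alpha>\<in>E. \<phi> \<alpha> = s \<cdot> y"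
  using idemE[of "s \<cdot> y"] by (metis as cl)

lemma lred: assumes s: "s \<in> S0" shows "\<exists>\<alpha>\<in>E. \<forall>w\<in>S0. Z (s \<cdot> w) \<longleftrightarrow> Z (\<phi> \<alpha> \<cdot> w)"
proof -
  obtain y where y: "y \<in> S0" "s \<cdot> (y \<cdot> s) = s" using inv s by auto
  obtain \<alpha> where a: "\<alpha> \<in> E" "\<phi> \<alpha> = y \<cdot> s" using idem_of s y by blast
  have "Z (s \<cdot> w) \<longleftrightarrow> Z (\<phi> \<alpha> \<cdot> w)" if w: "w \<in> S0" for w
  proof
    assume "Z (s \<cdot> w)" then show "Z (\<phi> \<alpha> \<cdot> w)" using Zl[of "s \<cdot> w" y] a s y w by simp
  next
    assume "Z (\<phi> \<alpha> \<cdot> w)" then have "Z (s \<cdot> (\<phi> \<alpha> \<cdot> w))" using Zl s by blast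
    moreover have "s \<cdot> (\<phi> \<alpha> \<cdot> w) = s \<cdot> w"
    proof -
      have "s \<cdot> (\<phi> \<alpha> \<cdot> w) = (s \<cdot> (y \<cdot> s)) \<cdot> w" using a y(1) s w by simp
      then show ?thesis using y by simp
    qed
    ultimately show "Z (s \<cdot> w)" by simp
  qed
  then show ?thesis using a by blast
qed

lemma rred: assumes s: "s \<in> S0" shows "\<exists>\<beta>\<in>E. \<forall>w\<in>S0. Z (w \<cdot> s) \<longleftrightarrow> Z (w \<cdot> \<phi> \<beta>)"
proof -
  obtain y where y: "y \<in> S0" "s \<cdot> (y \<cdot> s) = s" using inv s by auto
  obtain \<beta> where a: "\<beta> \<in> E" "\<phi> \<beta> = s \<cdot> y" using idem_of' s y by blast
  have "Z (w \<cdot> s) \<longleftrightarrow> Z (w \<cdot> \<phi> \<beta>)" if w: "w \<in> S0" for w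
  proof
    assume "Z (w \<cdot> s)" then show "Z (w \<cdot> \<phi> \<beta>)" using Zr[of "w \<cdot> s" y] a s y w by simp
  next
    assume "Z (w \<cdot> \<phi> \<beta>)" then have "Z (w \<cdot> \<phi> \<beta> \<cdot> s)" using Zr s by blast
    moreover have "w \<cdot> \<phi> \<beta> \<cdot> s = w \<cdot> s"
    proof -
      have "w \<cdot> \<phi> \<beta> \<cdot> s = w \<cdot> (s \<cdot> (y \<cdot> s))" using a y(1) s w by simp
      then show ?thesis using y by simp
    qed
    ultimately show "Z (w \<cdot> s)" by simp
  qed
  then show ?thesis using a by blast
qed

definition R :: "'b \<Rightarrow> ('a \<times> 'a) set" where
  "R x = {(\<alpha>, \<beta>). \<alpha> \<in> E \<and> \<beta> \<in> E \<and> Z (\<phi> \<alpha> \<cdot> (x \<cdot> \<phi> \<beta>))}"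

lemma R_iff: assumes x: "x \<in> S0" "x' \<in> S0"
  shows "R x = R x' \<longleftrightarrow> (\<forall>u\<in>S0. \<forall>v\<in>S0. Z (u \<cdot> (x \<cdot> v)) \<longleftrightarrow> Z (u \<cdot> (x' \<cdot> v)))"
proof
  assume H: "\<forall>u\<in>S0. \<forall>v\<in>S0. Z (u \<cdot> (x \<cdot> v)) \<longleftrightarrow> Z (u \<cdot> (x' \<cdot> v))"
  show "R x = R x'" unfolding R_def using H by auto
next
  assume H: "R x = R x'"
  show "\<forall>u\<in>S0. \<forall>v\<in>S0. Z (u \<cdot> (x \<cdot> v)) \<longleftrightarrow> Z (u \<cdot> (x' \<cdot> v))"
  proof (intro ballI)
    fix u v assume uv: "u \<in> S0" "v \<in> S0"
    obtain \<alpha> where a: "\<alpha> \<in> E" "\<forall>w\<in>S0. Z (u \<cdot> w) \<longleftrightarrow> Z (\<phi> \<alpha> \<cdot> w)" using lred uv by blast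
    obtain \<beta> where b: "\<beta> \<in> E" "\<forall>w\<in>S0. Z (w \<cdot> v) \<longleftrightarrow> Z (w \<cdot> \<phi> \<beta>)" using rred uv by blast
    have "Z (u \<cdot> (t \<cdot> v)) \<longleftrightarrow> (\<alpha>, \<beta>) \<in> R t" if t: "t \<in> S0" for t
    proof -
      have "Z (u \<cdot> (t \<cdot> v)) \<longleftrightarrow> Z (\<phi> \<alpha> \<cdot> (t \<cdot> v))" using a uv t by simp
      also have "\<dots> \<longleftrightarrow> Z ((\<phi> \<alpha> \<cdot> t) \<cdot> v)" using a uv t by simp
      also have "\<dots> \<longleftrightarrow> Z ((\<phi> \<alpha> \<cdot> t) \<cdot> \<phi> \<beta>)" using b(2)[rule_format, of "\<phi> \<alpha> \<cdot> t"] a uv t by simp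
      also have "\<dots> \<longleftrightarrow> (\<alpha>, \<beta>) \<in> R t" unfolding R_def using a b t by simp
      finally show ?thesis .
    qed
    then show "Z (u \<cdot> (x \<cdot> v)) \<longleftrightarrow> Z (u \<cdot> (x' \<cdot> v))" using H x by simp
  qed
qed

lemma congL: assumes "R x = R x'" "x \<in> S0" "x' \<in> S0" "u \<in> S0" shows "R (u \<cdot> x) = R (u \<cdot> x')"
proof -
  have H: "\<forall>u\<in>S0. \<forall>v\<in>S0. Z (u \<cdot> (x \<cdot> v)) \<longleftrightarrow> Z (u \<cdot> (x' \<cdot> v))" using R_iff assms by blast
  have "Z (a \<cdot> (u \<cdot> x \<cdot> b)) \<longleftrightarrow> Z (a \<cdot> (u \<cdot> x' \<cdot> b))" if "a \<in> S0" "b \<in> S0" for a b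
    using H[rule_format, of "a \<cdot> u" b] that assms by simp
  then show ?thesis using R_iff assms by simp
qed

lemma congR: assumes "R x = R x'" "x \<in> S0" "x' \<in> S0" "u \<in> S0" shows "R (x \<cdot> u) = R (x' \<cdot> u)"
proof -
  have H: "\<forall>u\<in>S0. \<forall>v\<in>S0. Z (u \<cdot> (x \<cdot> v)) \<longleftrightarrow> Z (u \<cdot> (x' \<cdot> v))" using R_iff assms by blast
  have "Z (a \<cdot> (x \<cdot> u \<cdot> b)) \<longleftrightarrow> Z (a \<cdot> (x' \<cdot> u \<cdot> b))" if "a \<in> S0" "b \<in> S0" for a b
    using H[rule_format, of a "u \<cdot> b"] that assms by simp
  then show ?thesis using R_iff assms by simp
qed

lemma R_full: assumes x: "x \<in> S0" shows "R x = E \<times> E \<longleftrightarrow> Z x"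
proof
  assume "Z x" then show "R x = E \<times> E" unfolding R_def using Zl Zr x by auto
next
  assume H: "R x = E \<times> E"
  obtain y where y: "y \<in> S0" "x \<cdot> (y \<cdot> x) = x" using inv x by auto
  obtain \<alpha> where a: "\<alpha> \<in> E" "\<phi> \<alpha> = x \<cdot> y" using idem_of' x y by blast
  obtain \<beta> where b: "\<beta> \<in> E" "\<phi> \<beta> = y \<cdot> x" using idem_of x y by blast
  have "(\<alpha>, \<beta>) \<in> R x" using H a(1) b(1) by auto
  then have "Z (\<phi> \<alpha> \<cdot> (x \<cdot> \<phi> \<beta>))" unfolding R_def by auto
  moreover have "\<phi> \<alpha> \<cdot> (x \<cdot> \<phi> \<beta>) = (x \<cdot> (y \<cdot> x)) \<cdot> (y \<cdot> x)" using a b x y(1) by simp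
  moreover have "\<dots> = x" using y(2) by (simp only:)
  ultimately show "Z x" by simp
qed

lemma sepL: assumes ab: "\<alpha> \<in> E" "\<beta> \<in> E" and H: "R (\<phi> \<alpha> \<cdot> \<phi> \<beta>) = R (\<phi> \<alpha>)"
  shows "\<phi> \<alpha> \<cdot> \<phi> \<beta> = \<phi> \<alpha>"
proof -
  have I: "\<forall>u\<in>S0. \<forall>v\<in>S0. Z (u \<cdot> ((\<phi> \<alpha> \<cdot> \<phi> \<beta>) \<cdot> v)) \<longleftrightarrow> Z (u \<cdot> (\<phi> \<alpha> \<cdot> v))"
    using R_iff[of "\<phi> \<alpha> \<cdot> \<phi> \<beta>" "\<phi> \<alpha>"] H ab by simp
  have "Z (\<phi> \<alpha> \<cdot> (\<phi> \<beta> \<cdot> \<phi> (c \<beta>)))" using Kc[of \<beta>] Zl ab by simp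
  then have "Z (\<phi> \<alpha> \<cdot> (\<phi> \<alpha> \<cdot> \<phi> (c \<beta>)))" using I[rule_format, of "\<phi> \<alpha>" "\<phi> (c \<beta>)"] ab by simp
  then have "Z (\<phi> \<alpha> \<cdot> \<phi> (c \<beta>))" using ab by simp
  then show ?thesis using K[of \<alpha> "c \<beta>"] ab by simp
qed

lemma sepR: assumes ab: "\<alpha> \<in> E" "\<beta> \<in> E" and H: "R (\<phi> \<alpha> \<cdot> \<phi> \<beta>) = R (\<phi> \<beta>)"
  shows "\<phi> \<alpha> \<cdot> \<phi> \<beta> = \<phi> \<beta>"
proof -
  have I: "\<forall>u\<in>S0. \<forall>v\<in>S0. Z (u \<cdot> ((\<phi> \<alpha> \<cdot> \<phi> \<beta>) \<cdot> v)) \<longleftrightarrow> Z (u \<cdot> (\<phi> \<beta> \<cdot> v))"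
    using R_iff[of "\<phi> \<alpha> \<cdot> \<phi> \<beta>" "\<phi> \<beta>"] H ab by simp
  have "Z (\<phi> (c \<alpha>) \<cdot> \<phi> \<alpha> \<cdot> \<phi> \<beta>)" using Kc'[of \<alpha>] Zr ab phiS by blast
  then have "Z (\<phi> (c \<alpha>) \<cdot> (\<phi> \<beta> \<cdot> \<phi> \<beta>))" using I[rule_format, of "\<phi> (c \<alpha>)" "\<phi> \<beta>"] ab by simp
  then have "Z (\<phi> (c \<alpha>) \<cdot> \<phi> \<beta>)" using ab by simp
  then have "\<phi> (c \<alpha>) \<cdot> \<phi> (c \<beta>) = \<phi> (c \<alpha>)" using K[of "c \<alpha>" \<beta>] ab by simp
  then show ?thesis using cii[of "c \<beta>" "c \<alpha>"] ab by simp
qed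

lemma R_inj: assumes ab: "\<alpha> \<in> E" "\<beta> \<in> E" and H: "R (\<phi> \<alpha>) = R (\<phi> \<beta>)" shows "\<alpha> = \<beta>"
proof -
  have "R (\<phi> \<alpha> \<cdot> \<phi> \<alpha>) = R (\<phi> \<alpha> \<cdot> \<phi> \<beta>)" using congL[OF H, of "\<phi> \<alpha>"] ab by simp
  then have 1: "\<phi> \<alpha> \<cdot> \<phi> \<beta> = \<phi> \<alpha>" using sepL ab by simp
  have "R (\<phi> \<alpha> \<cdot> \<phi> \<beta>) = R (\<phi> \<beta> \<cdot> \<phi> \<beta>)" using congR[OF H, of "\<phi> \<beta>"] ab by simp
  then have 2: "\<phi> \<alpha> \<cdot> \<phi> \<beta> = \<phi> \<beta>" using sepR ab by simp
  show ?thesis using 1 2 phi_inj ab by simp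
qed

lemma lallement: assumes x: "x \<in> S0" and H: "R (x \<cdot> x) = R x" shows "\<exists>\<gamma>\<in>E. R (\<phi> \<gamma>) = R x"
proof -
  obtain y where y: "y \<in> S0" "(x \<cdot> x) \<cdot> (y \<cdot> (x \<cdot> x)) = x \<cdot> x" using inv[of "x \<cdot> x"] x by auto
  have yy[simp]: "x \<cdot> (x \<cdot> (y \<cdot> (x \<cdot> (x \<cdot> v)))) = x \<cdot> (x \<cdot> v)" if "v \<in> S0" for v
  proof -
    have "x \<cdot> (x \<cdot> (y \<cdot> (x \<cdot> (x \<cdot> v)))) = ((x \<cdot> x) \<cdot> (y \<cdot> (x \<cdot> x))) \<cdot> v" using y(1) x that by simp
    also have "\<dots> = (x \<cdot> x) \<cdot> v" using y(2) by (simp only:)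
    also have "\<dots> = x \<cdot> (x \<cdot> v)" using that x by simp
    finally show ?thesis .
  qed
  have yy2: "x \<cdot> (x \<cdot> (y \<cdot> (x \<cdot> x))) = x \<cdot> x" using y x by simp
  define w where "w = y \<cdot> (x \<cdot> (x \<cdot> y))"
  define g where "g = x \<cdot> (w \<cdot> x)"
  have gS: "g \<in> S0" unfolding g_def w_def using x y by simp
  have gg: "g \<cdot> g = g" unfolding g_def w_def using x y by simp
  obtain \<gamma> where ga: "\<gamma> \<in> E" "g = \<phi> \<gamma>" using idemE gS gg by auto
  have "R (x \<cdot> (w \<cdot> x)) = R ((x \<cdot> x) \<cdot> (w \<cdot> x))" using congR[OF H[symmetric], of "w \<cdot> x"] x y unfolding w_def by simp
  also have "\<dots> = R ((x \<cdot> x \<cdot> w) \<cdot> x)" using x y unfolding w_def by simp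
  also have "\<dots> = R ((x \<cdot> x \<cdot> w) \<cdot> (x \<cdot> x))" using congL[OF H[symmetric], of "x \<cdot> x \<cdot> w"] x y unfolding w_def by simp
  also have "\<dots> = R (x \<cdot> x)" using x y yy2 unfolding w_def by simp
  also have "\<dots> = R x" using H .
  finally show ?thesis using ga unfolding g_def by auto
qed

definition enc :: "'b \<Rightarrow> ('a \<times> 'a) set" where "enc x = R x"
definition SS :: "('a \<times> 'a) set set" where "SS = enc ` S0"
definition rep :: "('a \<times> 'a) set \<Rightarrow> 'b" where "rep A = (SOME x. x \<in> S0 \<and> A = enc x)"
definition mult :: "('a \<times> 'a) set \<Rightarrow> ('a \<times> 'a) set \<Rightarrow> ('a \<times> 'a) set" where
  "mult A B = enc (rep A \<cdot> rep B)"

lemma enc_eq: "enc x = enc y \<longleftrightarrow> R x = R y" unfolding enc_def by auto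

lemma rep: assumes "x \<in> S0" shows "rep (enc x) \<in> S0" "R (rep (enc x)) = R x"
proof -
  have "\<exists>y. y \<in> S0 \<and> enc x = enc y" using assms by auto
  then have "rep (enc x) \<in> S0 \<and> enc x = enc (rep (enc x))" unfolding rep_def by (rule someI_ex)
  then show "rep (enc x) \<in> S0" "R (rep (enc x)) = R x" using enc_eq by auto
qed

lemma mult_enc[simp]: assumes "x \<in> S0" "y \<in> S0" shows "mult (enc x) (enc y) = enc (x \<cdot> y)"
proof -
  have "R (rep (enc x) \<cdot> rep (enc y)) = R (x \<cdot> rep (enc y))"
    by (rule congR[OF rep(2)[OF assms(1)] rep(1)[OF assms(1)] assms(1) rep(1)[OF assms(2)]])
  also have "\<dots> = R (x \<cdot> y)"
    by (rule congL[OF rep(2)[OF assms(2)] rep(1)[OF assms(2)] assms(2) assms(1)])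
  finally show ?thesis unfolding mult_def enc_eq .
qed

lemma RZ: "x \<in> S0 \<Longrightarrow> enc x = enc zz \<longleftrightarrow> Z x"
  using R_full[of x] R_full[of zz] Zo enc_eq by simp

lemma as_sub: "x \<cdot> y = d \<Longrightarrow> x \<in> S0 \<Longrightarrow> y \<in> S0 \<Longrightarrow> w \<in> S0 \<Longrightarrow> x \<cdot> (y \<cdot> w) = d \<cdot> w"
  using as by metis

lemma as_sub': "y \<cdot> w = d \<Longrightarrow> x \<in> S0 \<Longrightarrow> y \<in> S0 \<Longrightarrow> w \<in> S0 \<Longrightarrow> x \<cdot> y \<cdot> w = x \<cdot> d"
  using as by metis

lemma Z_left_eq: assumes s: "s \<in> S0" "\<beta> \<in> E" "\<phi> \<beta> \<cdot> s = s" "t \<in> S0" "s \<cdot> t = \<phi> \<beta>" and x: "x \<in> S0"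
  shows "Z (x \<cdot> s) \<longleftrightarrow> x \<cdot> \<phi> (c \<beta>) = x"
proof -
  have 1: "Z (x \<cdot> s) \<longleftrightarrow> Z (x \<cdot> \<phi> \<beta>)"
  proof
    assume "Z (x \<cdot> s)" then have "Z (x \<cdot> s \<cdot> t)" using Zr s by blast
    then show "Z (x \<cdot> \<phi> \<beta>)" using as_sub'[OF s(5) x s(1) s(4)] by simp
  next
    assume "Z (x \<cdot> \<phi> \<beta>)" then have "Z (x \<cdot> \<phi> \<beta> \<cdot> s)" using Zr s by blast
    then show "Z (x \<cdot> s)" using as_sub'[OF s(3) x _ s(1)] s by simp
  qed
  obtain y where y: "y \<in> S0" "x \<cdot> (y \<cdot> x) = x" using inv x by blast
  obtain \<eta> where et: "\<eta> \<in> E" "\<phi> \<eta> = y \<cdot> x" using idem_of x y by blast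
  have xe: "x \<cdot> \<phi> \<eta> = x" using et y by simp
  have 2: "Z (x \<cdot> \<phi> \<beta>) \<longleftrightarrow> Z (\<phi> \<eta> \<cdot> \<phi> \<beta>)"
  proof
    assume "Z (x \<cdot> \<phi> \<beta>)" then have "Z (y \<cdot> (x \<cdot> \<phi> \<beta>))" using Zl y by blast
    then show "Z (\<phi> \<eta> \<cdot> \<phi> \<beta>)" using as_sub[OF et(2)[symmetric] y(1) x, of "\<phi> \<beta>"] s by simp
  next
    assume "Z (\<phi> \<eta> \<cdot> \<phi> \<beta>)" then have "Z (x \<cdot> (\<phi> \<eta> \<cdot> \<phi> \<beta>))" using Zl x by blast
    then show "Z (x \<cdot> \<phi> \<beta>)" using as_sub[OF xe x _ , of "\<phi> \<beta>"] s et x y(1) by simp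
  qed
  have 3: "Z (\<phi> \<eta> \<cdot> \<phi> \<beta>) \<longleftrightarrow> \<phi> \<eta> \<cdot> \<phi> (c \<beta>) = \<phi> \<eta>" using K et s by blast
  have 4: "\<phi> \<eta> \<cdot> \<phi> (c \<beta>) = \<phi> \<eta> \<longleftrightarrow> x \<cdot> \<phi> (c \<beta>) = x"
  proof
    assume h: "\<phi> \<eta> \<cdot> \<phi> (c \<beta>) = \<phi> \<eta>"
    have "x \<cdot> \<phi> (c \<beta>) = x \<cdot> \<phi> \<eta> \<cdot> \<phi> (c \<beta>)" using xe by simp
    also have "\<dots> = x \<cdot> \<phi> \<eta>" using as_sub'[OF h x] et(1) s by simp
    finally show "x \<cdot> \<phi> (c \<beta>) = x" using xe by simp
  next
    assume h: "x \<cdot> \<phi> (c \<beta>) = x"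
    have "\<phi> \<eta> \<cdot> \<phi> (c \<beta>) = y \<cdot> (x \<cdot> \<phi> (c \<beta>))" using et y x s by simp
    also have "\<dots> = \<phi> \<eta>" using h et by simp
    finally show "\<phi> \<eta> \<cdot> \<phi> (c \<beta>) = \<phi> \<eta>" .
  qed
  show ?thesis using 1 2 3 4 by simp
qed

lemma Z_right_eq: assumes s: "s \<in> S0" "\<beta> \<in> E" "s \<cdot> \<phi> \<beta> = s" "t \<in> S0" "t \<cdot> s = \<phi> \<beta>" and x: "x \<in> S0"
  shows "Z (s \<cdot> x) \<longleftrightarrow> \<phi> (c \<beta>) \<cdot> x = x"
proof -
  have 1: "Z (s \<cdot> x) \<longleftrightarrow> Z (\<phi> \<beta> \<cdot> x)"
  proof
    assume "Z (s \<cdot> x)" then have "Z (t \<cdot> (s \<cdot> x))" using Zl s by blast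
    then show "Z (\<phi> \<beta> \<cdot> x)" using as_sub[OF s(5) s(4) s(1) x] by simp
  next
    assume "Z (\<phi> \<beta> \<cdot> x)" then have "Z (s \<cdot> (\<phi> \<beta> \<cdot> x))" using Zl s by blast
    then show "Z (s \<cdot> x)" using as_sub[OF s(3) s(1) _ x] s by simp
  qed
  obtain y where y: "y \<in> S0" "x \<cdot> (y \<cdot> x) = x" using inv x by blast
  obtain \<kappa> where et: "\<kappa> \<in> E" "\<phi> \<kappa> = x \<cdot> y" using idem_of' x y by blast
  have xe: "\<phi> \<kappa> \<cdot> x = x" using et y x by simp
  have 2: "Z (\<phi> \<beta> \<cdot> x) \<longleftrightarrow> Z (\<phi> \<beta> \<cdot> \<phi> \<kappa>)"
  proof
    assume "Z (\<phi> \<beta> \<cdot> x)" then have "Z (\<phi> \<beta> \<cdot> x \<cdot> y)" using Zr y by blast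
    then show "Z (\<phi> \<beta> \<cdot> \<phi> \<kappa>)" using et s x y by simp
  next
    assume "Z (\<phi> \<beta> \<cdot> \<phi> \<kappa>)" then have "Z (\<phi> \<beta> \<cdot> \<phi> \<kappa> \<cdot> x)" using Zr x by blast
    then show "Z (\<phi> \<beta> \<cdot> x)" using as_sub'[OF xe _ _ x, of "\<phi> \<beta>"] s et x y(1) by simp
  qed
  have 3: "Z (\<phi> \<beta> \<cdot> \<phi> \<kappa>) \<longleftrightarrow> \<phi> \<beta> \<cdot> \<phi> (c \<kappa>) = \<phi> \<beta>" using K et s by blast
  have 35: "\<phi> \<beta> \<cdot> \<phi> (c \<kappa>) = \<phi> \<beta> \<longleftrightarrow> \<phi> (c \<beta>) \<cdot> \<phi> \<kappa> = \<phi> \<kappa>"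
    using cii[of "c \<kappa>" \<beta>] et s by simp
  have 4: "\<phi> (c \<beta>) \<cdot> \<phi> \<kappa> = \<phi> \<kappa> \<longleftrightarrow> \<phi> (c \<beta>) \<cdot> x = x"
  proof
    assume h: "\<phi> (c \<beta>) \<cdot> \<phi> \<kappa> = \<phi> \<kappa>"
    have "\<phi> (c \<beta>) \<cdot> x = \<phi> (c \<beta>) \<cdot> (\<phi> \<kappa> \<cdot> x)" using xe by simp
    also have "\<dots> = \<phi> \<kappa> \<cdot> x" using as_sub[OF h _ _ x] et(1) s by simp
    finally show "\<phi> (c \<beta>) \<cdot> x = x" using xe by simp
  next
    assume h: "\<phi> (c \<beta>) \<cdot> x = x"
    have "\<phi> (c \<beta>) \<cdot> \<phi> \<kappa> = (\<phi> (c \<beta>) \<cdot> x) \<cdot> y" using et y x s by simp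
    also have "\<dots> = \<phi> \<kappa>" using h et by simp
    finally show "\<phi> (c \<beta>) \<cdot> \<phi> \<kappa> = \<phi> \<kappa>" .
  qed
  show ?thesis using 1 2 3 35 4 by simp
qed

lemma LA: assumes s: "s \<in> S0" "\<beta> \<in> E" "\<phi> \<beta> \<cdot> s = s" "t \<in> S0" "s \<cdot> t = \<phi> \<beta>"
  shows "left_ann SS mult (enc zz) (enc s) = enc ` {x\<in>S0. x \<cdot> \<phi> (c \<beta>) = x}"
proof -
  have "left_ann SS mult (enc zz) (enc s) = enc ` {x\<in>S0. Z (x \<cdot> s)}"
    unfolding left_ann_def SS_def
  proof (intro set_eqI iffI)
    fix X assume "X \<in> {X \<in> enc ` S0. mult X (enc s) = enc zz}"
    then obtain x where x: "x \<in> S0" "X = enc x" "mult (enc x) (enc s) = enc zz" by auto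
    then have "Z (x \<cdot> s)" using RZ[of "x \<cdot> s"] s by simp
    then show "X \<in> enc ` {x\<in>S0. Z (x \<cdot> s)}" using x by auto
  next
    fix X assume "X \<in> enc ` {x\<in>S0. Z (x \<cdot> s)}"
    then obtain x where x: "x \<in> S0" "X = enc x" "Z (x \<cdot> s)" by auto
    then have "mult (enc x) (enc s) = enc zz" using RZ[of "x \<cdot> s"] s by simp
    then show "X \<in> {X \<in> enc ` S0. mult X (enc s) = enc zz}" using x by auto
  qed
  also have "\<dots> = enc ` {x\<in>S0. x \<cdot> \<phi> (c \<beta>) = x}" using Z_left_eq[OF s] by auto
  finally show ?thesis .
qed

lemma RA: assumes s: "s \<in> S0" "\<beta> \<in> E" "s \<cdot> \<phi> \<beta> = s" "t \<in> S0" "t \<cdot> s = \<phi> \<beta>"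
  shows "right_ann SS mult (enc zz) (enc s) = enc ` {x\<in>S0. \<phi> (c \<beta>) \<cdot> x = x}"
proof -
  have "right_ann SS mult (enc zz) (enc s) = enc ` {x\<in>S0. Z (s \<cdot> x)}"
    unfolding right_ann_def SS_def
  proof (intro set_eqI iffI)
    fix X assume "X \<in> {X \<in> enc ` S0. mult (enc s) X = enc zz}"
    then obtain x where x: "x \<in> S0" "X = enc x" "mult (enc s) (enc x) = enc zz" by auto
    then have "Z (s \<cdot> x)" using RZ[of "s \<cdot> x"] s by simp
    then show "X \<in> enc ` {x\<in>S0. Z (s \<cdot> x)}" using x by auto
  next
    fix X assume "X \<in> enc ` {x\<in>S0. Z (s \<cdot> x)}"
    then obtain x where x: "x \<in> S0" "X = enc x" "Z (s \<cdot> x)" by auto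
    then have "mult (enc s) (enc x) = enc zz" using RZ[of "s \<cdot> x"] s by simp
    then show "X \<in> {X \<in> enc ` S0. mult (enc s) X = enc zz}" using x by auto
  qed
  also have "\<dots> = enc ` {x\<in>S0. \<phi> (c \<beta>) \<cdot> x = x}" using Z_right_eq[OF s] by auto
  finally show ?thesis .
qed

lemma PL: assumes a: "a \<in> S0" "\<eta> \<in> E" "a \<cdot> \<phi> \<eta> = a" "t \<in> S0" "t \<cdot> a = \<phi> \<eta>"
  shows "princ_left SS mult (enc a) = enc ` {x\<in>S0. x \<cdot> \<phi> \<eta> = x}"
proof
  show "princ_left SS mult (enc a) \<subseteq> enc ` {x\<in>S0. x \<cdot> \<phi> \<eta> = x}"
  proof
    fix X assume "X \<in> princ_left SS mult (enc a)"
    then consider "X = enc a" | x where "x \<in> S0" "X = enc (x \<cdot> a)" unfolding princ_left_def SS_def using a by auto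
    then show "X \<in> enc ` {x\<in>S0. x \<cdot> \<phi> \<eta> = x}"
    proof cases
      case 1 then show ?thesis using a by auto
    next
      case 2
      have "x \<cdot> a \<cdot> \<phi> \<eta> = x \<cdot> a" using as_sub'[OF a(3) 2(1) a(1)] a by simp
      then show ?thesis using 2 a by auto
    qed
  qed
next
  show "enc ` {x\<in>S0. x \<cdot> \<phi> \<eta> = x} \<subseteq> princ_left SS mult (enc a)"
  proof
    fix X assume "X \<in> enc ` {x\<in>S0. x \<cdot> \<phi> \<eta> = x}"
    then obtain x where x: "x \<in> S0" "x \<cdot> \<phi> \<eta> = x" "X = enc x" by auto
    have "x \<cdot> t \<cdot> a = x" using as_sub'[OF a(5) x(1) a(4) a(1)] x by simp
    then have "X = mult (enc (x \<cdot> t)) (enc a)" using x a by simp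
    moreover have "enc (x \<cdot> t) \<in> SS" unfolding SS_def using x a by simp
    ultimately show "X \<in> princ_left SS mult (enc a)" unfolding princ_left_def by blast
  qed
qed

lemma PR: assumes a: "a \<in> S0" "\<eta> \<in> E" "\<phi> \<eta> \<cdot> a = a" "t \<in> S0" "a \<cdot> t = \<phi> \<eta>"
  shows "princ_right SS mult (enc a) = enc ` {x\<in>S0. \<phi> \<eta> \<cdot> x = x}"
proof
  show "princ_right SS mult (enc a) \<subseteq> enc ` {x\<in>S0. \<phi> \<eta> \<cdot> x = x}"
  proof
    fix X assume "X \<in> princ_right SS mult (enc a)"
    then consider "X = enc a" | x where "x \<in> S0" "X = enc (a \<cdot> x)" unfolding princ_right_def SS_def using a by auto
    then show "X \<in> enc ` {x\<in>S0. \<phi> \<eta> \<cdot> x = x}"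
    proof cases
      case 1 then show ?thesis using a by auto
    next
      case 2
      have "\<phi> \<eta> \<cdot> (a \<cdot> x) = a \<cdot> x" using as_sub[OF a(3) _ a(1) 2(1)] a by simp
      then show ?thesis using 2 a by auto
    qed
  qed
next
  show "enc ` {x\<in>S0. \<phi> \<eta> \<cdot> x = x} \<subseteq> princ_right SS mult (enc a)"
  proof
    fix X assume "X \<in> enc ` {x\<in>S0. \<phi> \<eta> \<cdot> x = x}"
    then obtain x where x: "x \<in> S0" "\<phi> \<eta> \<cdot> x = x" "X = enc x" by auto
    have "a \<cdot> (t \<cdot> x) = x" using as_sub[OF a(5) a(1) a(4) x(1)] x by simp
    then have "X = mult (enc a) (enc (t \<cdot> x))" using x a by simp
    moreover have "enc (t \<cdot> x) \<in> SS" unfolding SS_def using x a by simp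
    ultimately show "X \<in> princ_right SS mult (enc a)" unfolding princ_right_def by blast
  qed
qed

lemma LAset: assumes s: "s \<in> S0" shows "\<exists>a\<in>S0. left_ann SS mult (enc zz) (enc s) = princ_left SS mult (enc a)"
proof -
  obtain y where y: "y \<in> S0" "s \<cdot> (y \<cdot> s) = s" using inv s by blast
  obtain \<beta> where b: "\<beta> \<in> E" "\<phi> \<beta> = s \<cdot> y" using idem_of' s y by blast
  have 1: "\<phi> \<beta> \<cdot> s = s" using b y s by simp
  have "left_ann SS mult (enc zz) (enc s) = enc ` {x\<in>S0. x \<cdot> \<phi> (c \<beta>) = x}"
    using LA[OF s b(1) 1 y(1) b(2)[symmetric]] .
  also have "\<dots> = princ_left SS mult (enc (\<phi> (c \<beta>)))"
    using PL[of "\<phi> (c \<beta>)" "c \<beta>" "\<phi> (c \<beta>)"] b by simp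
  finally show ?thesis using b by auto
qed

lemma PLset: assumes a: "a \<in> S0" shows "\<exists>s\<in>S0. princ_left SS mult (enc a) = left_ann SS mult (enc zz) (enc s)"
proof -
  obtain y where y: "y \<in> S0" "a \<cdot> (y \<cdot> a) = a" using inv a by blast
  obtain \<eta> where b: "\<eta> \<in> E" "\<phi> \<eta> = y \<cdot> a" using idem_of a y by blast
  have 1: "a \<cdot> \<phi> \<eta> = a" using b y a by simp
  have "princ_left SS mult (enc a) = enc ` {x\<in>S0. x \<cdot> \<phi> \<eta> = x}"
    using PL[OF a b(1) 1 y(1) b(2)[symmetric]] .
  also have "\<dots> = left_ann SS mult (enc zz) (enc (\<phi> (c \<eta>)))"
    using LA[of "\<phi> (c \<eta>)" "c \<eta>" "\<phi> (c \<eta>)"] b by simp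
  finally show ?thesis using b by auto
qed

lemma RAset: assumes s: "s \<in> S0" shows "\<exists>a\<in>S0. right_ann SS mult (enc zz) (enc s) = princ_right SS mult (enc a)"
proof -
  obtain y where y: "y \<in> S0" "s \<cdot> (y \<cdot> s) = s" using inv s by blast
  obtain \<beta> where b: "\<beta> \<in> E" "\<phi> \<beta> = y \<cdot> s" using idem_of s y by blast
  have 1: "s \<cdot> \<phi> \<beta> = s" using b y s by simp
  have "right_ann SS mult (enc zz) (enc s) = enc ` {x\<in>S0. \<phi> (c \<beta>) \<cdot> x = x}"
    using RA[OF s b(1) 1 y(1) b(2)[symmetric]] .
  also have "\<dots> = princ_right SS mult (enc (\<phi> (c \<beta>)))"
    using PR[of "\<phi> (c \<beta>)" "c \<beta>" "\<phi> (c \<beta>)"] b by simp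
  finally show ?thesis using b by auto
qed

lemma PRset: assumes a: "a \<in> S0" shows "\<exists>s\<in>S0. princ_right SS mult (enc a) = right_ann SS mult (enc zz) (enc s)"
proof -
  obtain y where y: "y \<in> S0" "a \<cdot> (y \<cdot> a) = a" using inv a by blast
  obtain \<eta> where b: "\<eta> \<in> E" "\<phi> \<eta> = a \<cdot> y" using idem_of' a y by blast
  have 1: "\<phi> \<eta> \<cdot> a = a" using b y a by simp
  have "princ_right SS mult (enc a) = enc ` {x\<in>S0. \<phi> \<eta> \<cdot> x = x}"
    using PR[OF a b(1) 1 y(1) b(2)[symmetric]] .
  also have "\<dots> = right_ann SS mult (enc zz) (enc (\<phi> (c \<eta>)))"
    using RA[of "\<phi> (c \<eta>)" "c \<eta>" "\<phi> (c \<eta>)"] b by simp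
  finally show ?thesis using b by auto
qed

lemma condeq: assumes ab: "\<alpha> \<in> E" "\<beta> \<in> E"
  shows "({mult (enc (\<phi> \<alpha>)) (enc (\<phi> \<beta>)), mult (enc (\<phi> \<beta>)) (enc (\<phi> \<alpha>))} \<inter> {enc (\<phi> \<alpha>), enc (\<phi> \<beta>)} \<noteq> {})
     \<longleftrightarrow> ({\<phi> \<alpha> \<cdot> \<phi> \<beta>, \<phi> \<beta> \<cdot> \<phi> \<alpha>} \<inter> {\<phi> \<alpha>, \<phi> \<beta>} \<noteq> {})"
proof -
  have 1: "enc (\<phi> \<alpha> \<cdot> \<phi> \<beta>) = enc (\<phi> \<alpha>) \<longleftrightarrow> \<phi> \<alpha> \<cdot> \<phi> \<beta> = \<phi> \<alpha>"
    using sepL[OF ab] unfolding enc_def by auto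
  have 2: "enc (\<phi> \<alpha> \<cdot> \<phi> \<beta>) = enc (\<phi> \<beta>) \<longleftrightarrow> \<phi> \<alpha> \<cdot> \<phi> \<beta> = \<phi> \<beta>"
    using sepR[OF ab] unfolding enc_def by auto
  have 3: "enc (\<phi> \<beta> \<cdot> \<phi> \<alpha>) = enc (\<phi> \<beta>) \<longleftrightarrow> \<phi> \<beta> \<cdot> \<phi> \<alpha> = \<phi> \<beta>"
    using sepL[of \<beta> \<alpha>] ab unfolding enc_def by auto
  have 4: "enc (\<phi> \<beta> \<cdot> \<phi> \<alpha>) = enc (\<phi> \<alpha>) \<longleftrightarrow> \<phi> \<beta> \<cdot> \<phi> \<alpha> = \<phi> \<alpha>"
    using sepR[of \<beta> \<alpha>] ab unfolding enc_def by auto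
  have ins: "\<And>x y u v. ({x, y} \<inter> {u, v} \<noteq> {}) = (x = u \<or> x = v \<or> y = u \<or> y = v)" by auto
  have m: "mult (enc (\<phi> \<alpha>)) (enc (\<phi> \<beta>)) = enc (\<phi> \<alpha> \<cdot> \<phi> \<beta>)"
    "mult (enc (\<phi> \<beta>)) (enc (\<phi> \<alpha>)) = enc (\<phi> \<beta> \<cdot> \<phi> \<alpha>)" using ab by simp_all
  show ?thesis by (simp only: m ins 1 2 3 4)
qed

lemma main: "\<exists>(S :: ('a \<times> 'a) set set) m \<psi>. strongly_regular_Baer S m \<and> iso_to_bos E p S m \<psi>"
proof (intro exI conjI)
  have sgS: "semigroup_on SS mult" unfolding semigroup_on_def SS_def by auto
  have zero: "is_zero SS mult (enc zz)"
  proof -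
    have "Z (zz \<cdot> x)" "Z (x \<cdot> zz)" if "x \<in> S0" for x using Zm[of zz x] Zm[of x zz] that by simp_all
    then show ?thesis unfolding is_zero_def SS_def using RZ by auto
  qed
  have L: "{left_ann SS mult (enc zz) s | s. s \<in> SS} = {princ_left SS mult a | a. a \<in> SS}"
  proof (intro set_eqI iffI)
    fix X assume "X \<in> {left_ann SS mult (enc zz) s | s. s \<in> SS}"
    then obtain s where "s \<in> S0" "X = left_ann SS mult (enc zz) (enc s)" unfolding SS_def by auto
    then show "X \<in> {princ_left SS mult a | a. a \<in> SS}" using LAset unfolding SS_def by blast
  next
    fix X assume "X \<in> {princ_left SS mult a | a. a \<in> SS}"
    then obtain a where "a \<in> S0" "X = princ_left SS mult (enc a)" unfolding SS_def by auto
    then show "X \<in> {left_ann SS mult (enc zz) s | s. s \<in> SS}" using PLset unfolding SS_def by blast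
  qed
  have Rr: "{right_ann SS mult (enc zz) s | s. s \<in> SS} = {princ_right SS mult a | a. a \<in> SS}"
  proof (intro set_eqI iffI)
    fix X assume "X \<in> {right_ann SS mult (enc zz) s | s. s \<in> SS}"
    then obtain s where "s \<in> S0" "X = right_ann SS mult (enc zz) (enc s)" unfolding SS_def by auto
    then show "X \<in> {princ_right SS mult a | a. a \<in> SS}" using RAset unfolding SS_def by blast
  next
    fix X assume "X \<in> {princ_right SS mult a | a. a \<in> SS}"
    then obtain a where "a \<in> S0" "X = princ_right SS mult (enc a)" unfolding SS_def by auto
    then show "X \<in> {right_ann SS mult (enc zz) s | s. s \<in> SS}" using PRset unfolding SS_def by blast
  qed
  show "strongly_regular_Baer SS mult" unfolding strongly_regular_Baer_def using sgS zero L Rr by blast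
  have idS: "idems SS mult = (\<lambda>\<alpha>. enc (\<phi> \<alpha>)) ` E"
  proof (intro set_eqI iffI)
    fix A assume "A \<in> idems SS mult"
    then obtain x where x: "x \<in> S0" "A = enc x" "enc (x \<cdot> x) = enc x" unfolding idems_def SS_def by auto
    then obtain \<gamma> where "\<gamma> \<in> E" "R (\<phi> \<gamma>) = R x" using lallement unfolding enc_def by blast
    then show "A \<in> (\<lambda>\<alpha>. enc (\<phi> \<alpha>)) ` E" using x unfolding enc_def by auto
  next
    fix A assume "A \<in> (\<lambda>\<alpha>. enc (\<phi> \<alpha>)) ` E"
    then show "A \<in> idems SS mult" unfolding idems_def SS_def by auto
  qed
  have bjS: "bij_betw (\<lambda>\<alpha>. enc (\<phi> \<alpha>)) E (idems SS mult)"
    unfolding bij_betw_def inj_on_def idS using R_inj unfolding enc_def by blast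
  have pr: "map_option (\<lambda>\<alpha>. enc (\<phi> \<alpha>)) (p \<alpha> \<beta>) = bos_prod SS mult (enc (\<phi> \<alpha>)) (enc (\<phi> \<beta>))"
    if ab: "\<alpha> \<in> E" "\<beta> \<in> E" for \<alpha> \<beta>
  proof -
    have i: "enc (\<phi> \<alpha>) \<in> idems SS mult" "enc (\<phi> \<beta>) \<in> idems SS mult" using idS ab by auto
    have i0: "\<phi> \<alpha> \<in> idems S0 m0" "\<phi> \<beta> \<in> idems S0 m0" using ab unfolding idems_def by auto
    have "map_option \<phi> (p \<alpha> \<beta>) = bos_prod S0 m0 (\<phi> \<alpha>) (\<phi> \<beta>)" using hm ab by blast
    also have "\<dots> = (if {\<phi> \<alpha> \<cdot> \<phi> \<beta>, \<phi> \<beta> \<cdot> \<phi> \<alpha>} \<inter> {\<phi> \<alpha>, \<phi> \<beta>} \<noteq> {} then Some (\<phi> \<alpha> \<cdot> \<phi> \<beta>) else None)"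
      unfolding bos_prod_def using i0 by simp
    finally have h: "map_option \<phi> (p \<alpha> \<beta>) = (if {\<phi> \<alpha> \<cdot> \<phi> \<beta>, \<phi> \<beta> \<cdot> \<phi> \<alpha>} \<inter> {\<phi> \<alpha>, \<phi> \<beta>} \<noteq> {} then Some (\<phi> \<alpha> \<cdot> \<phi> \<beta>) else None)" .
    have "map_option (\<lambda>\<alpha>. enc (\<phi> \<alpha>)) (p \<alpha> \<beta>) = map_option enc (map_option \<phi> (p \<alpha> \<beta>))"
      by (simp add: option.map_comp comp_def)
    also have "\<dots> = (if {\<phi> \<alpha> \<cdot> \<phi> \<beta>, \<phi> \<beta> \<cdot> \<phi> \<alpha>} \<inter> {\<phi> \<alpha>, \<phi> \<beta>} \<noteq> {} then Some (enc (\<phi> \<alpha> \<cdot> \<phi> \<beta>)) else None)"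
      using h by simp
    also have "\<dots> = bos_prod SS mult (enc (\<phi> \<alpha>)) (enc (\<phi> \<beta>))"
      unfolding bos_prod_def using i condeq[OF ab] ab by simp
    finally show ?thesis .
  qed
  show "iso_to_bos E p SS mult (\<lambda>\<alpha>. enc (\<phi> \<alpha>))" unfolding iso_to_bos_def using bjS pr by blast
qed

end

theorem theorem3p1:
  fixes E :: "'a set" and p :: "'a \<Rightarrow> 'a \<Rightarrow> 'a option"
    and S0 :: "'b set" and m0 :: "'b \<Rightarrow> 'b \<Rightarrow> 'b"
  assumes regular: "is_bos_of_regular E p S0 m0"
    and E1: "z \<in> E" "\<forall>e\<in>E. omega p z e"
    and E2: "\<forall>e\<in>E. c e \<in> E"
      "\<forall>e\<in>E. c (c e) = e"
      "\<forall>e\<in>E. \<forall>f\<in>E. omega_l p f e \<longleftrightarrow> omega_r p (c e) (c f)"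
      "\<forall>e\<in>E. \<forall>f\<in>E. omega_l p f (c e) \<longleftrightarrow> Mset E p f e = {z}"
  shows "\<exists>(S :: ('a \<times> 'a) set set) m \<phi>.
           strongly_regular_Baer S m \<and> iso_to_bos E p S m \<phi>"
proof -
  from regular obtain \<phi> where pa: "partial_algebra E p" and rs: "regular_semigroup_on S0 m0"
    and iso: "iso_to_bos E p S0 m0 \<phi>" unfolding is_bos_of_regular_def by blast
  interpret bx E p S0 m0 \<phi> z c
    using pa rs iso E1 E2 unfolding bx_def regular_semigroup_on_def iso_to_bos_def by blast
  show ?thesis by (rule main)
qed

end
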